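(* In the setting below, if $\bar A$ is a global minimizer of $\min_{A\in\mathbb{R}^{n\times m}}\sum_{t=0}^{T-1}\|(\bar A-A)f(x_t)+\bar d_t\|_2$, then $$\Big\|\sum_{t\in\mathcal K} f(x_t)\hat d_t^\top\Big\|_F\le \sum_{t\in\mathcal K^c}\|f(x_t)\|_2 .$$ Moreover, when $m=1$, this condition is also sufficient for $\bar A$ to be a global minimizer.
   Context: $f:\mathbb{R}^n\to\mathbb{R}^m$ is given, $\bar A\in\mathbb{R}^{n\times m}$, $\bar d_0,\dots,\bar d_{T-1}\in\mathbb{R}^n$, and $x_0=0_n$, $x_{t+1}=\bar A f(x_t)+\bar d_t$ for $t=0,\dots,T-1$. $\mathcal K:=\{t\in\{0,\dots,T-1\}:\bar d_t\ne 0\}$, $\mathcal K^c:=\{0,\dots,T-1\}\setminus\mathcal K$, $\hat d_t:=\bar d_t/\|\bar d_t\|_2$ for $t\in\mathcal K$; $\|\cdot\|_F$ is the Frobenius norm. *)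

theory Defs
  imports "HOL-Analysis.Analysis"
begin

text \<open>Vectors in R^n are real^'n; an n x m matrix is real^'m^'n (rows indexed by 'n).\<close>

fun traj :: "(real^'n \<Rightarrow> real^'m) \<Rightarrow> real^'m^'n \<Rightarrow> (nat \<Rightarrow> real^'n) \<Rightarrow> nat \<Rightarrow> real^'n" where
  "traj f A d 0 = 0"
| "traj f A d (Suc t) = A *v f (traj f A d t) + d t"

definition frob_norm :: "real^'c^'r \<Rightarrow> real" where
  "frob_norm M = sqrt (\<Sum>i\<in>UNIV. \<Sum>j\<in>UNIV. (M $ i $ j)^2)"

definition outer :: "real^'m \<Rightarrow> real^'n \<Rightarrow> real^'n^'m" where
  "outer u v = (\<chi> i j. u $ i * v $ j)"

definition cost :: "(real^'n \<Rightarrow> real^'m) \<Rightarrow> real^'m^'n \<Rightarrow> (nat \<Rightarrow> real^'n) \<Rightarrow> nat \<Rightarrow> real^'m^'n \<Rightarrow> real" where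
  "cost f Abar d T A = (\<Sum>t<T. norm ((Abar - A) *v f (traj f Abar d t) + d t))"

definition is_global_min :: "(real^'n \<Rightarrow> real^'m) \<Rightarrow> real^'m^'n \<Rightarrow> (nat \<Rightarrow> real^'n) \<Rightarrow> nat \<Rightarrow> bool" where
  "is_global_min f Abar d T \<longleftrightarrow> (\<forall>A. cost f Abar d T Abar \<le> cost f Abar d T A)"

end

theory Submission imports Defs begin

lemma frob_eq_norm: "frob_norm (M::real^'c^'r) = norm M"
proof -
  have "norm M = sqrt (M \<bullet> M)" by (simp add: norm_eq_sqrt_inner)
  also have "M \<bullet> M = (\<Sum>i\<in>UNIV. \<Sum>j\<in>UNIV. (M $ i $ j)^2)"
    by (simp add: inner_vec_def power2_eq_square)
  finally show ?thesis by (simp add: frob_norm_def)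
qed

lemma inner_outer: "(dh::real^'n) \<bullet> ((H::real^'m^'n) *v z) = outer z dh \<bullet> transpose H"
  by (simp add: inner_vec_def matrix_vector_mult_def outer_def transpose_def sum_distrib_left
        mult_ac sum.swap[of _ "UNIV::'n set"])

lemma norm_transpose: "norm (transpose (M::real^'c^'r)) = norm M"
proof -
  have "transpose M \<bullet> transpose M = M \<bullet> M"
    by (simp add: inner_vec_def transpose_def sum.swap[of _ "UNIV::'r set"])
  then show ?thesis by (simp add: norm_eq_sqrt_inner)
qed

lemma norm_mv_le: "norm ((H::real^'m^'n) *v z) \<le> norm H * norm z"
proof -
  have "norm (H *v z) ^ 2 = (\<Sum>i\<in>UNIV. (H $ i \<bullet> z)^2)"
    unfolding power2_norm_eq_inner by (simp add: inner_vec_def matrix_vector_mult_def power2_eq_square)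
  also have "\<dots> \<le> (\<Sum>i\<in>UNIV. (norm (H $ i))^2 * (norm z)^2)"
  proof (rule sum_mono)
    fix i
    have "\<bar>H $ i \<bullet> z\<bar> \<le> norm (H $ i) * norm z" by (rule Cauchy_Schwarz_ineq2)
    then have "\<bar>H $ i \<bullet> z\<bar>^2 \<le> (norm (H $ i) * norm z)^2" by (rule power_mono) simp
    then show "(H $ i \<bullet> z)^2 \<le> (norm (H $ i))^2 * (norm z)^2" by (simp add: power_mult_distrib)
  qed
  also have "\<dots> = (norm H * norm z)^2"
    by (simp add: power_mult_distrib sum_distrib_right[symmetric] power2_norm_eq_inner inner_vec_def)
  finally show ?thesis by (rule power2_le_imp_le) simp
qed

lemma norm_mv_eq1: assumes "CARD('m) = 1"
  shows "norm ((H::real^'m^'n) *v z) = norm H * norm z"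
proof -
  obtain j0 where U: "(UNIV::'m set) = {j0}" using assms card_1_singletonE by blast
  have "norm (H *v z) ^ 2 = (\<Sum>i\<in>UNIV. (H $ i $ j0 * z $ j0)^2)"
    unfolding power2_norm_eq_inner by (simp add: inner_vec_def matrix_vector_mult_def power2_eq_square U)
  also have "\<dots> = (\<Sum>i\<in>UNIV. (H $ i $ j0)^2) * (z $ j0)^2"
    by (simp add: power_mult_distrib sum_distrib_right)
  also have "(\<Sum>i\<in>UNIV. (H $ i $ j0)^2) = (norm H)^2"
    unfolding power2_norm_eq_inner by (simp add: inner_vec_def U power2_eq_square)
  also have "(z $ j0)^2 = (norm z)^2"
    unfolding power2_norm_eq_inner by (simp add: inner_vec_def U power2_eq_square)
  also have "(norm H)^2 * (norm z)^2 = (norm H * norm z)^2" by (simp add: power_mult_distrib)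
  finally show ?thesis by (simp add: power2_eq_iff_nonneg)
qed

lemma sqrt_bound:
  fixes d v :: "'a::real_inner"
  assumes "d \<noteq> 0"
  shows "norm (d + v) \<le> norm d + (inverse (norm d) *\<^sub>R d) \<bullet> v + (norm v)^2 / (2 * norm d)"
proof -
  define a where "a = norm d"
  define b where "b = 2 * (d \<bullet> v) + (norm v)^2"
  have a: "a > 0" using assms by (simp add: a_def)
  have sq: "(norm (d + v))^2 = a^2 + b"
    by (simp add: a_def b_def power2_norm_eq_inner inner_add_left inner_add_right inner_commute)
  have r: "norm d + (inverse (norm d) *\<^sub>R d) \<bullet> v + (norm v)^2 / (2 * norm d) = a + b / (2*a)"
    using a by (simp add: a_def b_def field_simps)
  have bge: "b \<ge> -(a^2)" using sq zero_le_power2[of "norm (d+v)"] by linarith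
  have "a + b/(2*a) \<ge> 0"
  proof -
    have "b/(2*a) \<ge> (-(a^2))/(2*a)" by (rule divide_right_mono) (use bge a in auto)
    also have "-(a^2)/(2*a) = -a/2" using a by (simp add: power2_eq_square)
    finally show ?thesis using a by linarith
  qed
  moreover have "(a + b/(2*a))^2 \<ge> a^2 + b"
  proof -
    have "(a + b/(2*a))^2 = a^2 + b + (b/(2*a))^2" using a by (simp add: power2_eq_square field_simps)
    then show ?thesis by simp
  qed
  ultimately have "norm (d+v) \<le> a + b/(2*a)" using sq by (metis power2_le_imp_le)
  then show ?thesis using r by simp
qed


lemma transpose_neg_scale: "transpose (-(e *\<^sub>R transpose (M::real^'c^'r))) = -(e *\<^sub>R M)"
  by (simp add: vec_eq_iff transpose_def)

theorem corollary2:
  fixes f :: "real^'n \<Rightarrow> real^'m"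
    and Abar :: "real^'m^'n"
    and d :: "nat \<Rightarrow> real^'n"
    and T :: nat
  defines "x \<equiv> traj f Abar d"
    and "K \<equiv> {t. t < T \<and> d t \<noteq> 0}"
    and "Kc \<equiv> {t. t < T \<and> d t = 0}"
  shows "(is_global_min f Abar d T \<longrightarrow>
            frob_norm (\<Sum>t\<in>K. outer (f (x t)) (inverse (norm (d t)) *\<^sub>R d t))
              \<le> (\<Sum>t\<in>Kc. norm (f (x t))))
       \<and> (CARD('m) = 1 \<longrightarrow>
            frob_norm (\<Sum>t\<in>K. outer (f (x t)) (inverse (norm (d t)) *\<^sub>R d t))
              \<le> (\<Sum>t\<in>Kc. norm (f (x t)))
            \<longrightarrow> is_global_min f Abar d T)"
proof -
  define z where "z t = f (x t)" for t
  define dh where "dh t = inverse (norm (d t)) *\<^sub>R d t" for t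
  define M where "M = (\<Sum>t\<in>K. outer (z t) (dh t))"
  define N where "N = norm M"
  define S where "S = (\<Sum>t\<in>Kc. norm (z t))"
  define D where "D = (\<Sum>t\<in>K. norm (d t))"
  have fK: "finite K" and fKc: "finite Kc" unfolding K_def Kc_def by auto
  have split: "{..<T} = K \<union> Kc" "K \<inter> Kc = {}" unfolding K_def Kc_def by auto
  have costH: "cost f Abar d T (Abar - H) = (\<Sum>t\<in>K. norm (H *v z t + d t)) + (\<Sum>t\<in>Kc. norm (H *v z t))" for H
  proof -
    have "cost f Abar d T (Abar - H) = (\<Sum>t\<in>K \<union> Kc. norm (H *v z t + d t))"
      unfolding cost_def split(1)[symmetric] z_def x_def by simp
    also have "\<dots> = (\<Sum>t\<in>K. norm (H *v z t + d t)) + (\<Sum>t\<in>Kc. norm (H *v z t + d t))"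
      by (rule sum.union_disjoint) (use fK fKc split in auto)
    also have "(\<Sum>t\<in>Kc. norm (H *v z t + d t)) = (\<Sum>t\<in>Kc. norm (H *v z t))"
      by (rule sum.cong) (auto simp: Kc_def)
    finally show ?thesis .
  qed
  have cost0: "cost f Abar d T Abar = D"
    using costH[of 0] by (simp add: D_def)
  have glob: "is_global_min f Abar d T \<longleftrightarrow> (\<forall>H. D \<le> cost f Abar d T (Abar - H))"
    unfolding is_global_min_def cost0
  proof
    assume "\<forall>A. D \<le> cost f Abar d T A" then show "\<forall>H. D \<le> cost f Abar d T (Abar - H)" by blast
  next
    assume h: "\<forall>H. D \<le> cost f Abar d T (Abar - H)"
    show "\<forall>A. D \<le> cost f Abar d T A"
    proof
      fix A :: "real^'m^'n"
      show "D \<le> cost f Abar d T A" using h[rule_format, of "Abar - A"] by simp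
    qed
  qed
  have dhK: "t \<in> K \<Longrightarrow> norm (dh t) = 1" for t by (simp add: dh_def K_def)
  have sumdh: "(\<Sum>t\<in>K. dh t \<bullet> (H *v z t)) = M \<bullet> transpose H" for H
    unfolding M_def inner_sum_left by (simp add: inner_outer)
  have frob: "frob_norm (\<Sum>t\<in>K. outer (f (x t)) (inverse (norm (d t)) *\<^sub>R d t)) = N"
    unfolding N_def M_def z_def dh_def frob_eq_norm ..
  have part1: "N \<le> S" if gm: "is_global_min f Abar d T"
  proof (rule ccontr)
    assume "\<not> N \<le> S"
    then have NS: "S < N" by simp
    have S0: "S \<ge> 0" unfolding S_def by (simp add: sum_nonneg)
    define C where "C = (\<Sum>t\<in>K. (N * norm (z t))^2 / (2 * norm (d t)))"
    have C0: "C \<ge> 0" unfolding C_def by (rule sum_nonneg) simp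
    define e where "e = N * (N - S) / (C + 1)"
    have P: "N * (N - S) > 0" using NS S0 by simp
    have e0: "e > 0" unfolding e_def using P C0 by simp
    have eC: "e * C < N * (N - S)"
    proof -
      have "e * C = N * (N - S) * (C / (C + 1))" unfolding e_def by simp
      also have "\<dots> < N * (N - S) * 1"
        using P C0 by (intro mult_strict_left_mono) auto
      finally show ?thesis by simp
    qed
    define H where "H = -(e *\<^sub>R transpose M)"
    have nH: "norm H = e * N" unfolding H_def N_def using e0 by (simp add: norm_transpose)
    have nHz: "norm (H *v z t) \<le> e * N * norm (z t)" for t
      using norm_mv_le[of H "z t"] nH by simp
    have A1: "(\<Sum>t\<in>K. norm (H *v z t + d t)) \<le> D - e * N^2 + e^2 * C"
    proof -
      have "(\<Sum>t\<in>K. norm (H *v z t + d t)) \<le> (\<Sum>t\<in>K. norm (d t) + dh t \<bullet> (H *v z t) + (e * N * norm (z t))^2 / (2 * norm (d t)))"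
      proof (rule sum_mono)
        fix t assume t: "t \<in> K"
        then have dt: "d t \<noteq> 0" by (simp add: K_def)
        have "norm (H *v z t + d t) \<le> norm (d t) + dh t \<bullet> (H *v z t) + (norm (H *v z t))^2 / (2 * norm (d t))"
          using sqrt_bound[OF dt, of "H *v z t"] by (simp add: add.commute dh_def)
        also have "(norm (H *v z t))^2 / (2 * norm (d t)) \<le> (e * N * norm (z t))^2 / (2 * norm (d t))"
          using nHz[of t] by (intro divide_right_mono power_mono) auto
        finally show "norm (H *v z t + d t) \<le> norm (d t) + dh t \<bullet> (H *v z t) + (e * N * norm (z t))^2 / (2 * norm (d t))" by simp
      qed
      also have "\<dots> = D + M \<bullet> transpose H + e^2 * C"
      proof -
        have "(\<Sum>t\<in>K. (e * N * norm (z t))^2 / (2 * norm (d t))) = e^2 * C"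
          unfolding C_def sum_distrib_left by (rule sum.cong) (simp_all add: power_mult_distrib)
        then show ?thesis unfolding sum.distrib D_def sumdh by simp
      qed
      also have "M \<bullet> transpose H = - e * N^2"
        unfolding H_def transpose_neg_scale N_def by (simp add: power2_norm_eq_inner)
      finally show ?thesis by simp
    qed
    have A2: "(\<Sum>t\<in>Kc. norm (H *v z t)) \<le> e * N * S"
      unfolding S_def sum_distrib_left by (rule sum_mono) (use nHz in simp)
    have "cost f Abar d T (Abar - H) \<le> D - e * (N * (N - S) - e * C)"
      using A1 A2 costH[of H] by (simp add: algebra_simps power2_eq_square)
    also have "\<dots> < D" using e0 eC by simp
    moreover have "D \<le> cost f Abar d T (Abar - H)" using gm glob by blast
    ultimately show False by linarith
  qed
  have part2: "is_global_min f Abar d T" if m1: "CARD('m) = 1" and NS: "N \<le> S"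
    unfolding glob
  proof
    fix H :: "real^'m^'n"
    have B1: "norm (d t) + dh t \<bullet> (H *v z t) \<le> norm (H *v z t + d t)" if t: "t \<in> K" for t
    proof -
      have "dh t \<bullet> (H *v z t + d t) \<le> norm (dh t) * norm (H *v z t + d t)" by (rule norm_cauchy_schwarz)
      moreover have "dh t \<bullet> d t = norm (d t)" using t by (simp add: dh_def K_def power2_norm_eq_inner[symmetric] power2_eq_square)
      ultimately show ?thesis using dhK[OF t] by (simp add: inner_add_right)
    qed
    have "D - N * norm H \<le> D + M \<bullet> transpose H"
    proof -
      have "\<bar>M \<bullet> transpose H\<bar> \<le> N * norm H"
        using Cauchy_Schwarz_ineq2[of M "transpose H"] by (simp add: N_def norm_transpose)
      then show ?thesis by linarith
    qed
    also have "D + M \<bullet> transpose H \<le> (\<Sum>t\<in>K. norm (H *v z t + d t))"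
      unfolding D_def sumdh[symmetric] sum.distrib[symmetric] by (rule sum_mono) (rule B1)
    finally have B: "D - N * norm H \<le> (\<Sum>t\<in>K. norm (H *v z t + d t))" .
    have C: "(\<Sum>t\<in>Kc. norm (H *v z t)) = norm H * S"
      unfolding S_def sum_distrib_left by (simp add: norm_mv_eq1[OF m1])
    have "N * norm H \<le> S * norm H" using NS by (simp add: mult_right_mono)
    then show "D \<le> cost f Abar d T (Abar - H)"
      using B C costH[of H] by (simp add: mult_ac)
  qed
  have SS: "(\<Sum>t\<in>Kc. norm (f (x t))) = S" unfolding S_def z_def ..
  show ?thesis unfolding frob SS using part1 part2 by blast
qed

end
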